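(* Let $S$ be the set of $\mathcal{G}$-invariant elements of $L_2(\mathcal{X},\mathcal{Y},\mu)$. For every $f\in L_2(\mathcal{X},\mathcal{Y},\mu)$, the function $\bar f=\mathcal{O}f$ is the unique solution of the least squares problem $\bar f=\operatorname{argmin}_{s\in S}\|f-s\|_\mu^2$.
   Context: $\mathcal{G}$ is a compact, second countable, Hausdorff topological group with Haar probability measure $\lambda$. $\mathcal{X}$ is a nonempty Polish space on which $\mathcal{G}$ acts measurably, $(g,x)\mapsto gx$. $\mathcal{Y}=\mathbb{R}^k$ with an inner product $\langle\cdot,\cdot\rangle$ and norm $\|\cdot\|$. $\mu$ is a $\mathcal{G}$-invariant Borel probability measure on $\mathcal{X}$. $L_2(\mathcal{X},\mathcal{Y},\mu)$ is the Hilbert space of $\mu$-a.e. classes of measurable $f:\mathcal{X}\to\mathcal{Y}$ with $\|f\|_\mu^2=\int\|f(x)\|^2d\mu(x)<\infty$, inner product $\langle f,h\rangle_\mu=\int\langle f(x),h(x)\rangle d\mu(x)$. A function $f$ is $\mathcal{G}$-invariant if $f(gx)=f(x)$ for all $g,x$. The orbit averaging operator is $\mathcal{O}f(x)=\int_\mathcal{G}f(gx)\,d\lambda(g)$. Uniqueness is as elements of $L_2(\mathcal{X},\mathcal{Y},\mu)$. *)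

theory Defs
  imports "HOL-Probability.Probability"
begin

definition top_group :: "('g::topological_space \<Rightarrow> 'g \<Rightarrow> 'g) \<Rightarrow> ('g \<Rightarrow> 'g) \<Rightarrow> 'g \<Rightarrow> bool" where
  "top_group m i e \<longleftrightarrow>
     (\<forall>a b c. m (m a b) c = m a (m b c)) \<and>
     (\<forall>a. m e a = a \<and> m a e = a) \<and>
     (\<forall>a. m (i a) a = e \<and> m a (i a) = e) \<and>
     continuous_on UNIV (\<lambda>p. m (fst p) (snd p)) \<and>
     continuous_on UNIV i"

definition haar_prob :: "('g::topological_space \<Rightarrow> 'g \<Rightarrow> 'g) \<Rightarrow> 'g measure \<Rightarrow> bool" where
  "haar_prob m lam \<longleftrightarrow> sets lam = sets borel \<and> prob_space lam \<and>
     (\<forall>g. \<forall>A\<in>sets borel. emeasure lam ((m g) ` A) = emeasure lam A)"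

definition meas_action :: "('g::topological_space \<Rightarrow> 'g \<Rightarrow> 'g) \<Rightarrow> 'g \<Rightarrow> ('g \<Rightarrow> 'x::topological_space \<Rightarrow> 'x) \<Rightarrow> bool" where
  "meas_action m e act \<longleftrightarrow>
     (\<lambda>p. act (fst p) (snd p)) \<in> measurable (borel \<Otimes>\<^sub>M borel) borel \<and>
     (\<forall>x. act e x = x) \<and> (\<forall>g h x. act (m g h) x = act g (act h x))"

definition invariant_prob :: "('g \<Rightarrow> 'x::topological_space \<Rightarrow> 'x) \<Rightarrow> 'x measure \<Rightarrow> bool" where
  "invariant_prob act mu \<longleftrightarrow> sets mu = sets borel \<and> prob_space mu \<and>
     (\<forall>g. \<forall>A\<in>sets borel. emeasure mu (act g -` A) = emeasure mu A)"

text \<open>Representatives of elements of L2(X,Y,mu).\<close>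
definition L2 :: "'x measure \<Rightarrow> ('x \<Rightarrow> 'y::euclidean_space) set" where
  "L2 mu = {f. f \<in> borel_measurable mu \<and> integrable mu (\<lambda>x. (norm (f x))\<^sup>2)}"

definition L2_norm_sq :: "'x measure \<Rightarrow> ('x \<Rightarrow> 'y::euclidean_space) \<Rightarrow> real" where
  "L2_norm_sq mu f = (\<integral>x. (norm (f x))\<^sup>2 \<partial>mu)"

definition G_invariant :: "('g \<Rightarrow> 'x \<Rightarrow> 'x) \<Rightarrow> ('x \<Rightarrow> 'y) \<Rightarrow> bool" where
  "G_invariant act f \<longleftrightarrow> (\<forall>g x. f (act g x) = f x)"

definition inv_L2 :: "('g \<Rightarrow> 'x \<Rightarrow> 'x) \<Rightarrow> 'x measure \<Rightarrow> ('x \<Rightarrow> 'y::euclidean_space) set" where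
  "inv_L2 act mu = {s \<in> L2 mu. G_invariant act s}"

definition orbit_avg :: "'g measure \<Rightarrow> ('g \<Rightarrow> 'x \<Rightarrow> 'x) \<Rightarrow> ('x \<Rightarrow> 'y::euclidean_space) \<Rightarrow> 'x \<Rightarrow> 'y" where
  "orbit_avg lam act f x = (\<integral>g. f (act g x) \<partial>lam)"

end

theory Submission
  imports Defs
begin


lemma grp_facts:
  assumes "top_group m i e"
  shows "\<And>a b c. m (m a b) c = m a (m b c)" "\<And>a. m e a = a" "\<And>a. m a e = a"
    "\<And>a. m (i a) a = e" "\<And>a. m a (i a) = e" "\<And>a. i (i a) = a"
    "\<And>a b. i (m a b) = m (i b) (i a)"
    "\<And>a b. m a (m (i a) b) = b" "\<And>a b. m (i a) (m a b) = b"
proof -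
  show A: "\<And>a b c. m (m a b) c = m a (m b c)" "\<And>a. m e a = a" "\<And>a. m a e = a"
    "\<And>a. m (i a) a = e" "\<And>a. m a (i a) = e" using assms unfolding top_group_def by auto
  have uniq: "\<And>a b. m a b = e \<Longrightarrow> b = i a"
  proof -
    fix a b assume h: "m a b = e"
    have "b = m (m (i a) a) b" using A by simp
    also have "\<dots> = m (i a) (m a b)" using A(1) by simp
    also have "\<dots> = i a" using h A by simp
    finally show "b = i a" .
  qed
  show "\<And>a. i (i a) = a" using uniq A(4) by (metis)
  show "\<And>a b. i (m a b) = m (i b) (i a)"
  proof -
    fix a b
    have "m (m a b) (m (i b) (i a)) = m a (m (m b (i b)) (i a))" by (simp only: A(1))
    also have "\<dots> = e" using A by simp
    finally show "i (m a b) = m (i b) (i a)" using uniq by (metis)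
  qed
  show "\<And>a b. m a (m (i a) b) = b" "\<And>a b. m (i a) (m a b) = b"
    by (simp_all add: A(2,4,5) flip: A(1))
qed

lemma grp_meas:
  fixes m :: "'g::second_countable_topology \<Rightarrow> 'g \<Rightarrow> 'g"
  assumes "top_group m i e"
  shows "(\<lambda>p. m (fst p) (snd p)) \<in> borel_measurable (borel \<Otimes>\<^sub>M borel)"
    "i \<in> borel_measurable borel" "\<And>y. m y \<in> borel_measurable borel"
    "\<And>h. (\<lambda>g. m g h) \<in> borel_measurable borel"
proof -
  have c: "continuous_on UNIV (\<lambda>p. m (fst p) (snd p))" "continuous_on UNIV i"
    using assms unfolding top_group_def by auto
  show "(\<lambda>p. m (fst p) (snd p)) \<in> borel_measurable (borel \<Otimes>\<^sub>M borel)"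
    unfolding borel_prod by (rule borel_measurable_continuous_onI[OF c(1)])
  show "i \<in> borel_measurable borel" by (rule borel_measurable_continuous_onI[OF c(2)])
  fix y h
  have "continuous_on UNIV (\<lambda>x. m (fst (y,x)) (snd (y,x)))"
    by (rule continuous_on_compose2[OF c(1)]) (auto intro: continuous_intros)
  then show "m y \<in> borel_measurable borel" by (intro borel_measurable_continuous_onI) simp
  have "continuous_on UNIV (\<lambda>x. m (fst (x,h)) (snd (x,h)))"
    by (rule continuous_on_compose2[OF c(1)]) (auto intro: continuous_intros)
  then show "(\<lambda>g. m g h) \<in> borel_measurable borel" by (intro borel_measurable_continuous_onI) simp
qed



lemma haar_right:
  fixes m :: "'g::second_countable_topology \<Rightarrow> 'g \<Rightarrow> 'g"
  assumes G: "top_group m i e" and H: "haar_prob m lam"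
  shows "distr lam lam (\<lambda>g. m g h) = lam"
proof -
  note gf = grp_facts[OF G]
  note gm = grp_meas[OF G]
  have sl: "sets lam = sets borel" and pl: "prob_space lam"
    and inv: "\<And>g A. A \<in> sets borel \<Longrightarrow> emeasure lam ((m g) ` A) = emeasure lam A"
    using H unfolding haar_prob_def by auto
  interpret prob_space lam by fact
  interpret pair_sigma_finite lam lam ..
  have sp: "space lam = UNIV" using sets_eq_imp_space_eq[OF sl] by simp
  have meas_cong: "\<And>f. f \<in> borel_measurable borel \<Longrightarrow> f \<in> measurable lam lam"
    using measurable_cong_sets[OF sl sl] by simp
  have left: "emeasure lam (m y -` A) = emeasure lam A" if "A \<in> sets borel" for y A
  proof -
    have "m y -` A = m (i y) ` A"
    proof
      show "m y -` A \<subseteq> m (i y) ` A"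
      proof
        fix x assume "x \<in> m y -` A"
        then have "m y x \<in> A" by simp
        moreover have "x = m (i y) (m y x)" using gf by simp
        ultimately show "x \<in> m (i y) ` A" by blast
      qed
      show "m (i y) ` A \<subseteq> m y -` A" using gf by auto
    qed
    then show ?thesis using inv[OF that] by simp
  qed
  have bor: "f -` A \<in> sets borel" if "f \<in> borel_measurable borel" "A \<in> sets borel" for f :: "'g \<Rightarrow> 'g" and A
    using measurable_sets[OF that] by simp
  have sym: "emeasure lam (i -` A) = emeasure lam A" if A: "A \<in> sets borel" for A
  proof -
    define \<phi> where "\<phi> = (\<lambda>p. indicator A (m (i (fst p)) (snd p)) :: ennreal)"
    have pm: "(\<lambda>p. m (i (fst p)) (snd p)) \<in> measurable (lam \<Otimes>\<^sub>M lam) borel"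
    proof -
      have "(\<lambda>p. (i (fst p), snd p)) \<in> measurable (borel \<Otimes>\<^sub>M borel) (borel \<Otimes>\<^sub>M borel)"
        using gm by (intro measurable_Pair) (auto intro: measurable_compose[OF measurable_fst])
      from measurable_comp[OF this gm(1)] have "(\<lambda>p. m (i (fst p)) (snd p)) \<in> borel_measurable (borel \<Otimes>\<^sub>M borel)"
        by (simp add: comp_def)
      then show ?thesis using sl by (simp add: measurable_cong_sets[OF sets_pair_measure_cong[OF sl sl] refl])
    qed
    have \<phi>m: "\<phi> \<in> borel_measurable (lam \<Otimes>\<^sub>M lam)"
      unfolding \<phi>_def using measurable_compose[OF pm borel_measurable_indicator[OF A]] by simp
    have i1: "(\<integral>\<^sup>+ x. \<phi> (y, x) \<partial>lam) = emeasure lam A" for y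
    proof -
      have "(\<integral>\<^sup>+ x. \<phi> (y, x) \<partial>lam) = (\<integral>\<^sup>+ x. indicator (m (i y) -` A) x \<partial>lam)"
        unfolding \<phi>_def by (auto intro!: nn_integral_cong simp: indicator_def)
      also have "\<dots> = emeasure lam (m (i y) -` A)"
        using bor[OF gm(3) A] sl by simp
      finally show ?thesis using left[OF A] by simp
    qed
    have i2: "(\<integral>\<^sup>+ y. \<phi> (y, x) \<partial>lam) = emeasure lam (i -` A)" for x
    proof -
      have "(\<integral>\<^sup>+ y. \<phi> (y, x) \<partial>lam) = (\<integral>\<^sup>+ y. indicator (m (i x) -` (i -` A)) y \<partial>lam)"
      proof (intro nn_integral_cong)
        fix y
        have "m (i y) x = i (m (i x) y)" using gf by simp
        then show "\<phi> (y, x) = indicator (m (i x) -` (i -` A)) y"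
          unfolding \<phi>_def by (simp add: indicator_def)
      qed
      also have "\<dots> = emeasure lam (m (i x) -` (i -` A))"
        using bor[OF gm(3) bor[OF gm(2) A]] sl by simp
      finally show ?thesis using left[OF bor[OF gm(2) A]] by simp
    qed
    have "(\<integral>\<^sup>+ x. (\<integral>\<^sup>+ y. \<phi> (y, x) \<partial>lam) \<partial>lam) = (\<integral>\<^sup>+ y. (\<integral>\<^sup>+ x. \<phi> (y, x) \<partial>lam) \<partial>lam)"
      by (rule Fubini[OF \<phi>m])
    then show ?thesis using i1 i2 by (simp add: emeasure_space_1)
  qed
  show ?thesis
  proof (rule measure_eqI)
    show "sets (distr lam lam (\<lambda>g. m g h)) = sets lam" by simp
    fix A assume "A \<in> sets (distr lam lam (\<lambda>g. m g h))"
    then have A: "A \<in> sets borel" using sl by simp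
    have "emeasure (distr lam lam (\<lambda>g. m g h)) A = emeasure lam ((\<lambda>g. m g h) -` A)"
      using A sl meas_cong[OF gm(4)] by (simp add: emeasure_distr sp)
    also have "\<dots> = emeasure lam (i -` ((\<lambda>g. m g h) -` A))"
      using sym[OF bor[OF gm(4) A]] by simp
    also have "i -` ((\<lambda>g. m g h) -` A) = m (i h) -` (i -` A)"
    proof -
      have "\<And>x. m (i x) h = i (m (i h) x)" using gf by simp
      then show ?thesis by auto
    qed
    also have "emeasure lam \<dots> = emeasure lam (i -` A)" using left[OF bor[OF gm(2) A]] .
    also have "\<dots> = emeasure lam A" using sym[OF A] .
    finally show "emeasure (distr lam lam (\<lambda>g. m g h)) A = emeasure lam A" .
  qed
qed



lemma L2_diff:
  fixes f g :: "'x \<Rightarrow> 'y::euclidean_space"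
  assumes "f \<in> L2 mu" "g \<in> L2 mu"
  shows "(\<lambda>x. f x - g x) \<in> L2 mu"
proof -
  have fm: "f \<in> borel_measurable mu" "g \<in> borel_measurable mu"
    and fi: "integrable mu (\<lambda>x. (norm (f x))\<^sup>2)" "integrable mu (\<lambda>x. (norm (g x))\<^sup>2)"
    using assms unfolding L2_def by auto
  have b: "(norm (a - b))\<^sup>2 \<le> 2 * (norm a)\<^sup>2 + 2 * (norm b)\<^sup>2" for a b :: 'y
  proof -
    have "norm (a - b) \<le> norm a + norm b" by (rule norm_triangle_ineq4)
    then have "(norm (a - b))\<^sup>2 \<le> (norm a + norm b)\<^sup>2" by (simp add: power_mono)
    also have "\<dots> \<le> 2 * (norm a)\<^sup>2 + 2 * (norm b)\<^sup>2"
      using zero_le_power2[of "norm a - norm b"] power2_diff[of "norm a" "norm b"] power2_sum[of "norm a" "norm b"] by linarith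
    finally show ?thesis .
  qed
  have i1: "integrable mu (\<lambda>x. 2 * (norm (f x))\<^sup>2 + 2 * (norm (g x))\<^sup>2)"
      using fi by auto
  have m1: "(\<lambda>x. (norm (f x - g x))\<^sup>2) \<in> borel_measurable mu" using fm by measurable
  have a1: "AE x in mu. norm ((norm (f x - g x))\<^sup>2) \<le> norm (2 * (norm (f x))\<^sup>2 + 2 * (norm (g x))\<^sup>2)"
      using b by auto
  have "integrable mu (\<lambda>x. (norm (f x - g x))\<^sup>2)"
    by (rule Bochner_Integration.integrable_bound[OF i1 m1 a1])
  then show ?thesis using fm unfolding L2_def by auto
qed

lemma L2_inner:
  fixes f g :: "'x \<Rightarrow> 'y::euclidean_space"
  assumes "f \<in> L2 mu" "g \<in> L2 mu"
  shows "integrable mu (\<lambda>x. f x \<bullet> g x)"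
proof -
  have fm: "f \<in> borel_measurable mu" "g \<in> borel_measurable mu"
    and fi: "integrable mu (\<lambda>x. (norm (f x))\<^sup>2)" "integrable mu (\<lambda>x. (norm (g x))\<^sup>2)"
    using assms unfolding L2_def by auto
  have b: "\<bar>a \<bullet> b\<bar> \<le> (norm a)\<^sup>2 + (norm b)\<^sup>2" for a b :: 'y
  proof -
    have "\<bar>a \<bullet> b\<bar> \<le> norm a * norm b" by (rule Cauchy_Schwarz_ineq2)
    also have "\<dots> \<le> (norm a)\<^sup>2 + (norm b)\<^sup>2"
      using zero_le_power2[of "norm a - norm b"] power2_diff[of "norm a" "norm b"]
        mult.assoc[of 2 "norm a" "norm b"] mult_nonneg_nonneg[OF norm_ge_zero norm_ge_zero, of a b] by linarith
    finally show ?thesis .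
  qed
  show ?thesis
  proof (rule Bochner_Integration.integrable_bound)
    show "integrable mu (\<lambda>x. (norm (f x))\<^sup>2 + (norm (g x))\<^sup>2)"
      using fi by auto
    show "(\<lambda>x. f x \<bullet> g x) \<in> borel_measurable mu" using fm by measurable
    show "AE x in mu. norm (f x \<bullet> g x) \<le> norm ((norm (f x))\<^sup>2 + (norm (g x))\<^sup>2)"
      using b by auto
  qed
qed

lemma jensen_sq:
  fixes F :: "'g \<Rightarrow> 'y::euclidean_space"
  assumes "prob_space M" "F \<in> borel_measurable M"
  shows "ennreal ((norm (integral\<^sup>L M F))\<^sup>2) \<le> (\<integral>\<^sup>+ g. ennreal ((norm (F g))\<^sup>2) \<partial>M)"
proof (cases "integrable M F")
  case False
  then show ?thesis by (simp add: not_integrable_integral_eq)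
next
  case True
  interpret prob_space M by fact
  have "ennreal (norm (integral\<^sup>L M F)) \<le> (\<integral>\<^sup>+x. norm (F x) \<partial>M)"
    using integral_norm_bound_ennreal[OF True] .
  then have "(ennreal (norm (integral\<^sup>L M F)))\<^sup>2 \<le> (\<integral>\<^sup>+x. norm (F x) \<partial>M)\<^sup>2"
    by (rule power_mono) simp
  also have "(\<integral>\<^sup>+x. norm (F x) \<partial>M) = (\<integral>\<^sup>+x. ennreal (norm (F x)) * 1 \<partial>M)" by simp
  also have "(\<dots>)\<^sup>2 \<le> (\<integral>\<^sup>+x. (ennreal (norm (F x)))^2 \<partial>M) * (\<integral>\<^sup>+x. (1::ennreal)^2 \<partial>M)"
    by (rule Cauchy_Schwarz_nn_integral) (use assms(2) in measurable)
  also have "\<dots> = (\<integral>\<^sup>+x. ennreal ((norm (F x))\<^sup>2) \<partial>M)"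
    by (simp add: ennreal_power emeasure_space_1)
  finally show ?thesis by (simp add: ennreal_power)
qed



lemma meas_nsq: "h \<in> borel_measurable M \<Longrightarrow> (\<lambda>x. ennreal ((norm (h x :: 'y::euclidean_space))\<^sup>2)) \<in> borel_measurable M"
  by measurable

lemma meas_nsq_real: "h \<in> borel_measurable M \<Longrightarrow> (\<lambda>x. (norm (h x :: 'y::euclidean_space))\<^sup>2) \<in> borel_measurable M"
  by measurable

lemma meas_inner: "h \<in> borel_measurable M \<Longrightarrow> k \<in> borel_measurable M \<Longrightarrow> (\<lambda>x. (h x :: 'y::euclidean_space) \<bullet> k x) \<in> borel_measurable M"
  by measurable

lemma norm_add_sq: "(norm (a + b))\<^sup>2 = (norm a)\<^sup>2 + 2 * (a \<bullet> b) + (norm (b :: 'y::euclidean_space))\<^sup>2"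
  by (simp add: power2_norm_eq_inner inner_add inner_commute algebra_simps)

lemma le_one_plus_sq: "(y::real) \<le> 1 + y\<^sup>2"
proof -
  have h: "(y - 1)\<^sup>2 = y\<^sup>2 - 2 * y + 1" by (simp add: power2_diff)
  have "0 \<le> (y - 1)\<^sup>2" "0 \<le> y\<^sup>2" by simp_all
  then show ?thesis using h by linarith
qed

theorem proposition3p9:
  fixes m :: "'g::{t2_space, second_countable_topology} \<Rightarrow> 'g \<Rightarrow> 'g"
    and i :: "'g \<Rightarrow> 'g" and e :: 'g
    and lam :: "'g measure"
    and act :: "'g \<Rightarrow> 'x::polish_space \<Rightarrow> 'x"
    and mu :: "'x measure"
    and f :: "'x \<Rightarrow> 'y::euclidean_space"
  assumes "top_group m i e"
    and "compact (UNIV :: 'g set)"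
    and "haar_prob m lam"
    and "meas_action m e act"
    and "invariant_prob act mu"
    and "f \<in> L2 mu"
  shows "orbit_avg lam act f \<in> inv_L2 act mu
         \<and> (\<forall>s \<in> inv_L2 act mu. L2_norm_sq mu (\<lambda>x. f x - orbit_avg lam act f x)
                                 \<le> L2_norm_sq mu (\<lambda>x. f x - s x))
         \<and> (\<forall>s \<in> inv_L2 act mu.
               (\<forall>s' \<in> inv_L2 act mu. L2_norm_sq mu (\<lambda>x. f x - s x) \<le> L2_norm_sq mu (\<lambda>x. f x - s' x))
               \<longrightarrow> (AE x in mu. s x = orbit_avg lam act f x))"
proof -
  have sl: "sets lam = sets borel" and pl: "prob_space lam"
    using assms(3) unfolding haar_prob_def by auto
  have sm: "sets mu = sets borel" and pm: "prob_space mu"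
    and minv: "\<And>g A. A \<in> sets borel \<Longrightarrow> emeasure mu (act g -` A) = emeasure mu A"
    using assms(5) unfolding invariant_prob_def by auto
  have am: "(\<lambda>p. act (fst p) (snd p)) \<in> measurable (borel \<Otimes>\<^sub>M borel) borel"
    and amul: "\<And>g h x. act (m g h) x = act g (act h x)"
    using assms(4) unfolding meas_action_def by auto
  interpret L: prob_space lam by fact
  interpret M: prob_space mu by fact
  interpret LM: pair_sigma_finite lam mu ..
  interpret PML: pair_sigma_finite mu lam ..
  have spm: "space mu = UNIV" "space lam = UNIV"
    using sets_eq_imp_space_eq[OF sm] sets_eq_imp_space_eq[OF sl] by auto
  have actm: "(\<lambda>p. act (fst p) (snd p)) \<in> measurable (lam \<Otimes>\<^sub>M mu) mu"
    using am measurable_cong_sets[OF sets_pair_measure_cong[OF sl sm] sm] by simp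
  have actm2: "(\<lambda>p. act (snd p) (fst p)) \<in> measurable (mu \<Otimes>\<^sub>M lam) mu"
    using measurable_compose[OF measurable_Pair[OF measurable_snd measurable_fst] actm] by simp
  have actg: "act g \<in> measurable mu mu" for g
    using measurable_compose[OF measurable_Pair1'[of g lam mu] actm] spm by simp
  have actx: "(\<lambda>g. act g x) \<in> measurable lam mu" for x
    using measurable_compose[OF measurable_Pair2'[of x mu lam] actm] spm by simp
  have distr_mu: "distr mu mu (act g) = mu" for g
  proof (rule measure_eqI)
    fix A assume "A \<in> sets (distr mu mu (act g))"
    then have A: "A \<in> sets mu" by simp
    then show "emeasure (distr mu mu (act g)) A = emeasure mu A"
      using emeasure_distr[OF actg A] minv[of A g] sm spm by simp
  qed simp
  have fm: "f \<in> borel_measurable mu" and fi: "integrable mu (\<lambda>x. (norm (f x))\<^sup>2)"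
    using assms(6) unfolding L2_def by auto
  have nninv: "(\<integral>\<^sup>+x. \<phi> (act g x) \<partial>mu) = integral\<^sup>N mu \<phi>" if "\<phi> \<in> borel_measurable mu" for g and \<phi> :: "'x \<Rightarrow> ennreal"
  proof -
    have "integral\<^sup>N (distr mu mu (act g)) \<phi> = (\<integral>\<^sup>+x. \<phi> (act g x) \<partial>mu)"
      by (rule nn_integral_distr[OF actg]) (use that in simp)
    then show ?thesis using distr_mu by simp
  qed
  have binv: "(\<integral>x. \<psi> (act g x) \<partial>mu) = integral\<^sup>L mu \<psi>" if "\<psi> \<in> borel_measurable mu" for g and \<psi> :: "'x \<Rightarrow> real"
  proof -
    have "integral\<^sup>L (distr mu mu (act g)) \<psi> = (\<integral>x. \<psi> (act g x) \<partial>mu)"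
      by (rule integral_distr[OF actg that])
    then show ?thesis using distr_mu by simp
  qed
  have tonelli: "(\<integral>\<^sup>+x. (\<integral>\<^sup>+g. \<phi> (act g x) \<partial>lam) \<partial>mu) = integral\<^sup>N mu \<phi>"
    if \<phi>m: "\<phi> \<in> borel_measurable mu" for \<phi> :: "'x \<Rightarrow> ennreal"
  proof -
    have Fm: "(\<lambda>p. \<phi> (act (fst p) (snd p))) \<in> borel_measurable (lam \<Otimes>\<^sub>M mu)"
      by (rule measurable_compose[OF actm \<phi>m])
    have "(\<integral>\<^sup>+x. (\<integral>\<^sup>+g. \<phi> (act g x) \<partial>lam) \<partial>mu) = (\<integral>\<^sup>+g. (\<integral>\<^sup>+x. \<phi> (act g x) \<partial>mu) \<partial>lam)"
      using LM.Fubini[OF Fm] by simp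
    also have "\<dots> = (\<integral>\<^sup>+g. integral\<^sup>N mu \<phi> \<partial>lam)" using nninv[OF \<phi>m] by simp
    also have "\<dots> = integral\<^sup>N mu \<phi>" by (simp add: L.emeasure_space_1)
    finally show ?thesis .
  qed
  have fubini: "(\<integral>x. (\<integral>g. \<psi> (act g x) \<partial>lam) \<partial>mu) = integral\<^sup>L mu \<psi>"
    if \<psi>i: "integrable mu \<psi>" for \<psi> :: "'x \<Rightarrow> real"
  proof -
    have \<psi>m: "\<psi> \<in> borel_measurable mu" using \<psi>i by simp
    have Fm: "(\<lambda>p. \<psi> (act (fst p) (snd p))) \<in> borel_measurable (lam \<Otimes>\<^sub>M mu)"
      by (rule measurable_compose[OF actm \<psi>m])
    have Fnm: "(\<lambda>p. ennreal (norm (\<psi> (act (fst p) (snd p))))) \<in> borel_measurable (lam \<Otimes>\<^sub>M mu)"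
      using Fm by measurable
    have "(\<integral>\<^sup>+p. ennreal (norm (\<psi> (act (fst p) (snd p)))) \<partial>(lam \<Otimes>\<^sub>M mu))
        = (\<integral>\<^sup>+g. (\<integral>\<^sup>+x. ennreal (norm (\<psi> (act g x))) \<partial>mu) \<partial>lam)"
      using M.nn_integral_fst[OF Fnm] by simp
    also have "\<dots> = (\<integral>\<^sup>+g. (\<integral>\<^sup>+x. ennreal (norm (\<psi> x)) \<partial>mu) \<partial>lam)"
    proof -
      have "(\<lambda>x. ennreal (norm (\<psi> x))) \<in> borel_measurable mu" using \<psi>m by measurable
      from nninv[OF this] show ?thesis by simp
    qed
    also have "\<dots> = (\<integral>\<^sup>+x. ennreal (norm (\<psi> x)) \<partial>mu)" by (simp add: L.emeasure_space_1)
    also have "\<dots> < \<infinity>" using \<psi>i by (simp add: integrable_iff_bounded)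
    finally have intF: "integrable (lam \<Otimes>\<^sub>M mu) (\<lambda>p. \<psi> (act (fst p) (snd p)))"
      by (intro integrableI_bounded Fm)
    have "(\<integral>x. (\<integral>g. \<psi> (act g x) \<partial>lam) \<partial>mu) = (\<integral>g. (\<integral>x. \<psi> (act g x) \<partial>mu) \<partial>lam)"
      using LM.Fubini_integral[of "\<lambda>g x. \<psi> (act g x)"] intF by (simp add: split_beta')
    also have "\<dots> = (\<integral>g. integral\<^sup>L mu \<psi> \<partial>lam)" using binv[OF \<psi>m] by simp
    also have "\<dots> = integral\<^sup>L mu \<psi>" by (simp add: L.prob_space)
    finally show ?thesis .
  qed
  define Av where "Av = orbit_avg lam act f"
  have Av_eq: "Av x = (\<integral>g. f (act g x) \<partial>lam)" for x unfolding Av_def orbit_avg_def ..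
  have Fm: "(\<lambda>(x, g). f (act g x)) \<in> borel_measurable (mu \<Otimes>\<^sub>M lam)"
    using measurable_compose[OF actm2 fm] by (simp add: split_beta')
  have Om: "Av \<in> borel_measurable mu"
    unfolding Av_eq by (rule L.borel_measurable_lebesgue_integral[OF Fm])
  have Fx: "(\<lambda>g. f (act g x)) \<in> borel_measurable lam" for x
    by (rule measurable_compose[OF actx fm])
  define I where "I x = (\<integral>\<^sup>+g. ennreal ((norm (f (act g x)))\<^sup>2) \<partial>lam)" for x
  have Im: "I \<in> borel_measurable mu"
  proof -
    have "(\<lambda>p. ennreal ((norm (f (act (snd p) (fst p))))\<^sup>2)) \<in> borel_measurable (mu \<Otimes>\<^sub>M lam)"
      by (rule meas_nsq[OF measurable_compose[OF actm2 fm]])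
    from L.borel_measurable_nn_integral_fst[OF this] show ?thesis unfolding I_def by simp
  qed
  have intI: "(\<integral>\<^sup>+x. I x \<partial>mu) = ennreal (\<integral>x. (norm (f x))\<^sup>2 \<partial>mu)"
    unfolding I_def
    by (subst tonelli) (auto intro!: meas_nsq fm nn_integral_eq_integral fi borel_measurable_integrable)
  have OI: "ennreal ((norm (Av x))\<^sup>2) \<le> I x" for x
    unfolding Av_eq I_def by (rule jensen_sq[OF pl Fx])
  have OL2: "Av \<in> L2 mu"
  proof -
    have "(\<integral>\<^sup>+x. ennreal (norm ((norm (Av x))\<^sup>2)) \<partial>mu) \<le> (\<integral>\<^sup>+x. I x \<partial>mu)"
      using OI by (auto intro!: nn_integral_mono)
    also have "\<dots> < \<infinity>" using intI by simp
    finally have "integrable mu (\<lambda>x. (norm (Av x))\<^sup>2)"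
      by (intro integrableI_bounded) (use Om in measurable)
    then show ?thesis using Om unfolding L2_def by auto
  qed
  have Oinv: "G_invariant act Av"
    unfolding G_invariant_def
  proof (intro allI)
    fix h x
    have mh: "(\<lambda>g. m g h) \<in> measurable lam lam"
      using grp_meas(4)[OF assms(1)] measurable_cong_sets[OF sl sl] by simp
    have "Av (act h x) = (\<integral>g. f (act (m g h) x) \<partial>lam)" unfolding Av_eq amul ..
    also have "\<dots> = integral\<^sup>L (distr lam lam (\<lambda>g. m g h)) (\<lambda>g. f (act g x))"
      by (rule integral_distr[OF mh Fx, symmetric])
    also have "\<dots> = Av x" unfolding haar_right[OF assms(1,3)] Av_eq ..
    finally show "Av (act h x) = Av x" .
  qed
  have AEint: "AE x in mu. integrable lam (\<lambda>g. f (act g x))"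
  proof -
    have "AE x in mu. I x \<noteq> \<infinity>"
      by (rule nn_integral_PInf_AE[OF Im]) (simp add: intI)
    then show ?thesis
    proof (rule AE_mp, intro AE_I2 impI)
      fix x assume Ix: "I x \<noteq> \<infinity>"
      have "(\<integral>\<^sup>+g. ennreal (norm (f (act g x))) \<partial>lam) \<le> (\<integral>\<^sup>+g. (1 + ennreal ((norm (f (act g x)))\<^sup>2)) \<partial>lam)"
      proof (intro nn_integral_mono)
        fix g
        have "norm (f (act g x)) \<le> 1 + (norm (f (act g x)))\<^sup>2"
          by (rule le_one_plus_sq)
        then have "ennreal (norm (f (act g x))) \<le> ennreal (1 + (norm (f (act g x)))\<^sup>2)"
          by (rule ennreal_leI)
        also have "\<dots> = 1 + ennreal ((norm (f (act g x)))\<^sup>2)"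
          by (simp add: ennreal_plus)
        finally show "ennreal (norm (f (act g x))) \<le> 1 + ennreal ((norm (f (act g x)))\<^sup>2)" .
      qed
      also have "\<dots> = 1 + I x"
        unfolding I_def by (subst nn_integral_add) (auto intro!: meas_nsq meas_nsq_real Fx simp: L.emeasure_space_1)
      also have "\<dots> < \<infinity>" using Ix by (simp add: less_top)
      finally show "integrable lam (\<lambda>g. f (act g x))"
        by (intro integrableI_bounded Fx)
    qed
  qed
  have orth: "(\<integral>x. Av x \<bullet> t x \<partial>mu) = (\<integral>x. f x \<bullet> t x \<partial>mu)" if t: "t \<in> inv_L2 act mu" for t
  proof -
    have tL2: "t \<in> L2 mu" and tinv: "\<And>g x. t (act g x) = t x"
      using t unfolding inv_L2_def G_invariant_def by auto
    have tm: "t \<in> borel_measurable mu" using tL2 unfolding L2_def by auto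
    have ftm: "(\<lambda>y. f y \<bullet> t y) \<in> borel_measurable mu" by (rule meas_inner[OF fm tm])
    have m2: "(\<lambda>x. \<integral>g. f (act g x) \<bullet> t (act g x) \<partial>lam) \<in> borel_measurable mu"
    proof (rule L.borel_measurable_lebesgue_integral)
      show "(\<lambda>(x, g). f (act g x) \<bullet> t (act g x)) \<in> borel_measurable (mu \<Otimes>\<^sub>M lam)"
        using measurable_compose[OF actm2 ftm] by (simp add: split_beta')
    qed
    have "(\<integral>x. Av x \<bullet> t x \<partial>mu) = (\<integral>x. (\<integral>g. f (act g x) \<bullet> t (act g x) \<partial>lam) \<partial>mu)"
    proof (rule integral_cong_AE)
      show "(\<lambda>x. Av x \<bullet> t x) \<in> borel_measurable mu" by (rule meas_inner[OF Om tm])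
      show "(\<lambda>x. \<integral>g. f (act g x) \<bullet> t (act g x) \<partial>lam) \<in> borel_measurable mu" by (rule m2)
      show "AE x in mu. Av x \<bullet> t x = (\<integral>g. f (act g x) \<bullet> t (act g x) \<partial>lam)"
        using AEint by eventually_elim (simp add: Av_eq tinv)
    qed
    also have "\<dots> = (\<integral>x. f x \<bullet> t x \<partial>mu)"
      by (rule fubini[OF L2_inner[OF assms(6) tL2]])
    finally show ?thesis .
  qed
  have fL2: "f \<in> L2 mu" by (rule assms(6))
  have key: "L2_norm_sq mu (\<lambda>x. f x - s x) = L2_norm_sq mu (\<lambda>x. f x - Av x) + L2_norm_sq mu (\<lambda>x. Av x - s x)"
    if s: "s \<in> inv_L2 act mu" for s
  proof -
    have sL2: "s \<in> L2 mu" and sinv: "G_invariant act s" using s unfolding inv_L2_def by auto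
    define t where "t x = Av x - s x" for x
    have tL2: "t \<in> L2 mu" unfolding t_def by (rule L2_diff[OF OL2 sL2])
    have tinv: "t \<in> inv_L2 act mu" using tL2 Oinv sinv unfolding inv_L2_def G_invariant_def t_def by auto
    have dL2: "(\<lambda>x. f x - Av x) \<in> L2 mu" by (rule L2_diff[OF fL2 OL2])
    have pw: "(norm (f x - s x))\<^sup>2 = (norm (f x - Av x))\<^sup>2 + 2 * ((f x - Av x) \<bullet> t x) + (norm (t x))\<^sup>2" for x
      using norm_add_sq[of "f x - Av x" "t x"] unfolding t_def by simp
    have i1: "integrable mu (\<lambda>x. (norm (f x - Av x))\<^sup>2)" using dL2 unfolding L2_def by auto
    have i2: "integrable mu (\<lambda>x. (f x - Av x) \<bullet> t x)" by (rule L2_inner[OF dL2 tL2])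
    have i3: "integrable mu (\<lambda>x. (norm (t x))\<^sup>2)" using tL2 unfolding L2_def by auto
    have i4: "integrable mu (\<lambda>x. f x \<bullet> t x)" by (rule L2_inner[OF fL2 tL2])
    have i5: "integrable mu (\<lambda>x. Av x \<bullet> t x)" by (rule L2_inner[OF OL2 tL2])
    have z: "(\<integral>x. (f x - Av x) \<bullet> t x \<partial>mu) = 0"
      using orth[OF tinv] i4 i5 by (simp add: inner_diff_left)
    have "L2_norm_sq mu (\<lambda>x. f x - s x) = (\<integral>x. (norm (f x - Av x))\<^sup>2 + 2 * ((f x - Av x) \<bullet> t x) + (norm (t x))\<^sup>2 \<partial>mu)"
      unfolding L2_norm_sq_def pw ..
    also have "\<dots> = (\<integral>x. (norm (f x - Av x))\<^sup>2 \<partial>mu) + 2 * (\<integral>x. (f x - Av x) \<bullet> t x \<partial>mu) + (\<integral>x. (norm (t x))\<^sup>2 \<partial>mu)"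
      using i1 i2 i3 by simp
    also have "\<dots> = L2_norm_sq mu (\<lambda>x. f x - Av x) + L2_norm_sq mu (\<lambda>x. Av x - s x)"
    proof -
      have z': "(\<integral>x. (f x - Av x) \<bullet> (Av x - s x) \<partial>mu) = 0" using z unfolding t_def .
      show ?thesis using z' unfolding L2_norm_sq_def t_def by simp
    qed
    finally show ?thesis .
  qed
  have nn: "0 \<le> L2_norm_sq mu h" for h :: "'x \<Rightarrow> 'y"
    unfolding L2_norm_sq_def by simp
  have part1: "Av \<in> inv_L2 act mu" using OL2 Oinv unfolding inv_L2_def by auto
  have part2: "\<forall>s \<in> inv_L2 act mu. L2_norm_sq mu (\<lambda>x. f x - Av x) \<le> L2_norm_sq mu (\<lambda>x. f x - s x)"
    using key nn by (metis le_add_same_cancel1)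
  have part3: "AE x in mu. s x = Av x"
    if s: "s \<in> inv_L2 act mu"
      and smin: "\<forall>s' \<in> inv_L2 act mu. L2_norm_sq mu (\<lambda>x. f x - s x) \<le> L2_norm_sq mu (\<lambda>x. f x - s' x)" for s
  proof -
    have "L2_norm_sq mu (\<lambda>x. f x - s x) \<le> L2_norm_sq mu (\<lambda>x. f x - Av x)" using smin part1 by blast
    then have "L2_norm_sq mu (\<lambda>x. Av x - s x) \<le> 0" using key[OF s] by simp
    then have z: "(\<integral>x. (norm (Av x - s x))\<^sup>2 \<partial>mu) = 0" using nn[of "\<lambda>x. Av x - s x"] unfolding L2_norm_sq_def by simp
    have sL2: "s \<in> L2 mu" using s unfolding inv_L2_def by auto
    have "integrable mu (\<lambda>x. (norm (Av x - s x))\<^sup>2)" using L2_diff[OF OL2 sL2] unfolding L2_def by auto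
    then have "AE x in mu. (norm (Av x - s x))\<^sup>2 = 0"
      using integral_nonneg_eq_0_iff_AE[of mu "\<lambda>x. (norm (Av x - s x))\<^sup>2"] z by simp
    then show ?thesis by eventually_elim simp
  qed
  show ?thesis unfolding Av_def[symmetric] using part1 part2 part3 by blast
qed


end
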